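(* Let $R$ be a ring with identity and let $a \in R$ satisfy $a^2 = 1$. If $a = e + q$ where $e \in R$ is an idempotent ($e^2 = e$) and $q \in R$ is nilpotent, then $e = 1$. In particular, every involution of $R$ that is the sum of an idempotent and a nilpotent is of the form $1 + q$ for some nilpotent $q \in R$.
   Context: Rings are associative with identity (not necessarily commutative). *)

theory Defs
  imports Main
begin

definition nilpotent :: "'a::ring_1 \<Rightarrow> bool" where
  "nilpotent q \<longleftrightarrow> (\<exists>n::nat. q ^ n = 0)"

end

theory Submission
  imports Defs
begin

lemma pow_zero_ge:
  fixes q :: "'a::ring_1"
  assumes "q ^ n = 0" "n \<le> i"
  shows "q ^ i = 0"
proof -
  have "q ^ i = q ^ n * q ^ (i - n)" using assms(2) by (simp flip: power_add)
  thus ?thesis using assms(1) by simp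
qed

lemma anti_zero:
  fixes q c :: "'a::ring_1"
  assumes qn: "q ^ n = 0" and hc: "c = -(q*c + c*q)"
  shows "c = 0"
proof -
  have step: "q^i*c*q^j = -(q^(Suc i)*c*q^j + q^i*c*q^(Suc j))" for i j
  proof -
    have "q^i*c*q^j = q^i*(-(q*c + c*q))*q^j" using hc by simp
    also have "\<dots> = -(q^i*q*c*q^j + q^i*c*(q*q^j))" by (simp add: algebra_simps)
    also have "\<dots> = -(q^(Suc i)*c*q^j + q^i*c*q^(Suc j))"
      by (simp only: power_Suc2 power_commutes)
    finally show ?thesis .
  qed
  have "\<forall>i j. 2*n \<le> i+j+k \<longrightarrow> q^i*c*q^j = 0" for k
  proof (induction k)
    case 0
    show ?case
    proof (intro allI impI)
      fix i j assume "2*n \<le> i+j+0"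
      hence "n \<le> i \<or> n \<le> j" by arith
      thus "q^i*c*q^j = 0" using pow_zero_ge[OF qn] by auto
    qed
  next
    case (Suc k)
    show ?case
    proof (intro allI impI)
      fix i j assume "2*n \<le> i+j+Suc k"
      hence "q^(Suc i)*c*q^j = 0" "q^i*c*q^(Suc j) = 0" using Suc.IH
        by (metis add_Suc add_Suc_right)+
      thus "q^i*c*q^j = 0" using step[of i j] by simp
    qed
  qed
  from this[of "2*n"] have "q^0*c*q^0 = 0" by (metis le_add2 add_0)
  thus ?thesis by simp
qed

theorem proposition1:
  fixes a e q :: "'a::ring_1"
  assumes "a ^ 2 = 1"
    and "e ^ 2 = e"
    and "nilpotent q"
    and "a = e + q"
  shows "e = 1 \<and> a = 1 + q"
proof -
  obtain n where qn: "q ^ n = 0" using assms(3) unfolding nilpotent_def by auto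
  have ee: "e * e = e" using assms(2) by (simp add: power2_eq_square)
  have aa: "(e+q)*(e+q) = 1" using assms(1,4) by (simp add: power2_eq_square)
  have "e*q + q*e + q*q = (e+q)*(e+q) - e*e" by (simp add: algebra_simps)
  hence hS: "e*q + q*e + q*q = 1 - e" using aa ee by simp
  have "q*(e*q + q*e + q*q) - (e*q + q*e + q*q)*q = q*(1-e) - (1-e)*q" by (simp add: hS)
  hence "q*q*e - e*(q*q) = e*q - q*e" by (simp add: algebra_simps)
  hence hc: "e*q - q*e = -(q*(e*q - q*e) + (e*q - q*e)*q)" by (simp add: algebra_simps)
  have comm: "e*q = q*e" using anti_zero[OF qn hc] by simp
  have "(e*q + q*e + q*q)*(1-e) = (1-e)*(1-e)" by (simp add: hS)
  hence "q*q*(1-e) = 1 - e" using ee comm by (simp add: algebra_simps)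
  hence it: "q^(2*k)*(1-e) = 1 - e" for k
  proof (induction k)
    case (Suc k)
    have "q^(2*Suc k)*(1-e) = q^(2*k)*(q*q*(1-e))" 
    proof -
      have "q^(2*Suc k) = q^(2*k) * (q*q)" by (simp only: mult_2 power_add power_Suc2 power_Suc add_Suc_right add_Suc power_0 mult_1_left mult.assoc)
      thus ?thesis by (simp add: mult.assoc)
    qed
    thus ?case using Suc by simp
  qed simp
  have "q^(2*n) = 0" using pow_zero_ge[OF qn] by simp
  with it[of n] have "1 - e = 0" by simp
  hence "e = 1" by simp
  thus ?thesis using assms(4) by simp
qed

end
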